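(* For every $H\in(0,1]$ there exists a positive number $\alpha_H>0$ such that \[ E\, e^{\delta |\zeta_H|^{2H}}<\infty \quad\text{for all } \delta<\alpha_H . \]
   Context: Let $H\in(0,1]$ and let $W^H=\{W^H_s,\ s\in\mathbb{R}\}$ be a two-sided fractional Brownian motion with Hurst parameter $H$: a centered Gaussian process with continuous trajectories, $W^H_0=0$, $E(W^H_s)=0$ and $E|W^H_s-W^H_t|^2=|s-t|^{2H}$ for all $s,t\in\mathbb{R}$ (so its covariance is $R(t,s)=\frac12(|t|^{2H}+|s|^{2H}-|t-s|^{2H})$). Define $Z_t=\exp\{W^H_t-\tfrac12|t|^{2H}\}$ for $t\in\mathbb{R}$, the random density $q_t=Z_t\left(\int_{-\infty}^{\infty}Z_u\,du\right)^{-1}$, and the Pitman-type random variable $\zeta_H=\int_{-\infty}^{\infty} t\,q_t\,dt$. *)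

theory Defs
  imports "HOL-Probability.Probability"
begin

definition fbm_cov :: "real \<Rightarrow> real \<Rightarrow> real \<Rightarrow> real" where
  "fbm_cov H t s = (\<bar>t\<bar> powr (2*H) + \<bar>s\<bar> powr (2*H) - \<bar>t - s\<bar> powr (2*H)) / 2"

definition centered_gaussian :: "'a measure \<Rightarrow> ('a \<Rightarrow> real) \<Rightarrow> real \<Rightarrow> bool" where
  "centered_gaussian M X v \<longleftrightarrow>
     X \<in> borel_measurable M \<and>
     ((v = 0 \<and> (AE \<omega> in M. X \<omega> = 0)) \<or>
      (v > 0 \<and> distributed M lborel X (\<lambda>x. ennreal (normal_density 0 (sqrt v) x))))"

definition is_fbm :: "'a measure \<Rightarrow> real \<Rightarrow> (real \<Rightarrow> 'a \<Rightarrow> real) \<Rightarrow> bool" where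
  "is_fbm M H W \<longleftrightarrow>
     prob_space M \<and>
     (\<forall>t. W t \<in> borel_measurable M) \<and>
     (\<forall>\<omega>\<in>space M. continuous_on UNIV (\<lambda>t. W t \<omega>)) \<and>
     (\<forall>\<omega>\<in>space M. W 0 \<omega> = 0) \<and>
     (\<forall>I c. finite I \<longrightarrow>
        centered_gaussian M (\<lambda>\<omega>. \<Sum>t\<in>I. c t * W t \<omega>)
          (\<Sum>s\<in>I. \<Sum>t\<in>I. c s * c t * fbm_cov H s t))"

definition fbm_Z :: "real \<Rightarrow> (real \<Rightarrow> 'a \<Rightarrow> real) \<Rightarrow> real \<Rightarrow> 'a \<Rightarrow> real" where
  "fbm_Z H W t \<omega> = exp (W t \<omega> - \<bar>t\<bar> powr (2*H) / 2)"

definition fbm_q :: "real \<Rightarrow> (real \<Rightarrow> 'a \<Rightarrow> real) \<Rightarrow> real \<Rightarrow> 'a \<Rightarrow> real" where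
  "fbm_q H W t \<omega> = fbm_Z H W t \<omega> / (\<integral>u. fbm_Z H W u \<omega> \<partial>lborel)"

definition pitman_zeta :: "real \<Rightarrow> (real \<Rightarrow> 'a \<Rightarrow> real) \<Rightarrow> 'a \<Rightarrow> real" where
  "pitman_zeta H W \<omega> = (\<integral>t. t * fbm_q H W t \<omega> \<partial>lborel)"

end

theory Submission
  imports Defs "HOL-Analysis.Summation_Tests"
begin


lemma gauss_nn_exp:
  assumes "prob_space M" "v > 0"
    and D: "distributed M lborel X (\<lambda>x. ennreal (normal_density 0 (sqrt v) x))"
  shows "(\<integral>\<^sup>+\<omega>. ennreal (exp ((X \<omega>)\<^sup>2 / (4 * v))) \<partial>M) = ennreal (sqrt 2)"
proof -
  have "(\<integral>\<^sup>+\<omega>. ennreal (exp ((X \<omega>)\<^sup>2 / (4 * v))) \<partial>M)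
      = (\<integral>\<^sup>+x. ennreal (normal_density 0 (sqrt v) x) * ennreal (exp (x\<^sup>2 / (4 * v))) \<partial>lborel)"
    by (rule distributed_nn_integral[OF D, symmetric]) simp
  also have "\<dots> = (\<integral>\<^sup>+x. ennreal (sqrt 2 * normal_density 0 (sqrt 2 * sqrt v) x) \<partial>lborel)"
  proof (rule nn_integral_cong)
    fix x :: real
    have "normal_density 0 (sqrt v) x * exp (x\<^sup>2 / (4 * v)) = sqrt 2 * normal_density 0 (sqrt 2 * sqrt v) x"
    proof -
      have e: "exp (-(x - 0)\<^sup>2 / (2 * (sqrt v)\<^sup>2)) * exp (x\<^sup>2 / (4 * v)) = exp (-(x - 0)\<^sup>2 / (2 * (sqrt 2 * sqrt v)\<^sup>2))"
        using assms(2) by (simp add: exp_add[symmetric] power_mult_distrib field_simps)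
      have s: "1 / sqrt (2 * pi * (sqrt v)\<^sup>2) = sqrt 2 * (1 / sqrt (2 * pi * (sqrt 2 * sqrt v)\<^sup>2))"
        using assms(2) by (simp add: power_mult_distrib real_sqrt_mult field_simps)
      show ?thesis unfolding normal_density_def using e s by (simp add: mult.assoc)
    qed
    then show "ennreal (normal_density 0 (sqrt v) x) * ennreal (exp (x\<^sup>2 / (4 * v))) = ennreal (sqrt 2 * normal_density 0 (sqrt 2 * sqrt v) x)"
      by (simp add: ennreal_mult[symmetric])
  qed
  also have "\<dots> = ennreal (sqrt 2) * (\<integral>\<^sup>+x. ennreal (normal_density 0 (sqrt 2 * sqrt v) x) \<partial>lborel)"
    by (simp add: ennreal_mult nn_integral_cmult)
  also have "(\<integral>\<^sup>+x. ennreal (normal_density 0 (sqrt 2 * sqrt v) x) \<partial>lborel) = 1"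
  proof -
    have pos: "0 < sqrt 2 * sqrt v" using assms(2) by simp
    show ?thesis
      by (subst nn_integral_eq_integral) (auto simp: integrable_normal_density[OF pos] integral_normal_density[OF pos])
  qed
  also have "ennreal (sqrt 2) * 1 = ennreal (sqrt 2)" by simp
  finally show ?thesis .
qed


lemma gauss_tail:
  assumes P: "prob_space M" and G: "centered_gaussian M X v" and "0 \<le> a"
  shows "measure M {\<omega>\<in>space M. a \<le> \<bar>X \<omega>\<bar>} \<le> 2 * exp (-(a\<^sup>2) / (4 * v))"
proof -
  interpret prob_space M by (rule P)
  from G have Xm: "X \<in> borel_measurable M" and cases: "v = 0 \<or> (v > 0 \<and> distributed M lborel X (\<lambda>x. ennreal (normal_density 0 (sqrt v) x)))"
    unfolding centered_gaussian_def by auto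
  show ?thesis
  proof (cases "v > 0")
    case False
    then have "v = 0" using cases by auto
    have "prob {\<omega>\<in>space M. a \<le> \<bar>X \<omega>\<bar>} \<le> 1" by (rule prob_le_1)
    moreover have "2 * exp (-(a\<^sup>2) / (4 * v)) = 2" using \<open>v = 0\<close> by simp
    ultimately show ?thesis by linarith
  next
    case True
    then have D: "distributed M lborel X (\<lambda>x. ennreal (normal_density 0 (sqrt v) x))" using cases by auto
    have "emeasure M {\<omega>\<in>space M. a \<le> \<bar>X \<omega>\<bar>} = (\<integral>\<^sup>+\<omega>. indicator {\<omega>\<in>space M. a \<le> \<bar>X \<omega>\<bar>} \<omega> \<partial>M)"
      using Xm by (subst nn_integral_indicator) auto
    also have "\<dots> \<le> (\<integral>\<^sup>+\<omega>. ennreal (exp (-(a\<^sup>2) / (4 * v))) * ennreal (exp ((X \<omega>)\<^sup>2 / (4 * v))) \<partial>M)"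
    proof (rule nn_integral_mono)
      fix \<omega> assume "\<omega> \<in> space M"
      show "indicator {\<omega>\<in>space M. a \<le> \<bar>X \<omega>\<bar>} \<omega> \<le> ennreal (exp (-(a\<^sup>2) / (4 * v))) * ennreal (exp ((X \<omega>)\<^sup>2 / (4 * v)))"
      proof (cases "a \<le> \<bar>X \<omega>\<bar>")
        case True
        have "a\<^sup>2 \<le> \<bar>X \<omega>\<bar>\<^sup>2" using True \<open>0 \<le> a\<close> by (rule power_mono)
        then have "-(a\<^sup>2) / (4 * v) + (X \<omega>)\<^sup>2 / (4 * v) \<ge> 0"
          using \<open>v > 0\<close> by (simp add: field_simps)
        then have "1 \<le> exp (-(a\<^sup>2) / (4 * v) + (X \<omega>)\<^sup>2 / (4 * v))" by auto
        then show ?thesis using \<open>\<omega> \<in> space M\<close> True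
          by (simp add: ennreal_mult[symmetric] exp_add[symmetric] indicator_def)
      qed (simp add: indicator_def)
    qed
    also have "\<dots> = ennreal (exp (-(a\<^sup>2) / (4 * v))) * ennreal (sqrt 2)"
      using Xm by (subst nn_integral_cmult) (auto simp: gauss_nn_exp[OF P True D])
    also have "\<dots> \<le> ennreal (2 * exp (-(a\<^sup>2) / (4 * v)))"
      by (simp add: ennreal_mult[symmetric] ennreal_le_iff) (smt (verit) exp_gt_zero real_sqrt_le_iff real_sqrt_four)
    finally show ?thesis
      by (simp add: emeasure_eq_measure)
  qed
qed



definition chain_r :: "real \<Rightarrow> real" where "chain_r h = 2 powr (-h/4)"
definition chain_eps :: "real \<Rightarrow> nat \<Rightarrow> real" where "chain_eps h n = (1 - chain_r h) * chain_r h ^ n"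

lemma chain_r_bounds: "h > 0 \<Longrightarrow> 0 < chain_r h \<and> chain_r h < 1"
  unfolding chain_r_def by (auto intro!: powr_less_one)

lemma chain_eps_nonneg: "h > 0 \<Longrightarrow> 0 \<le> chain_eps h n"
  using chain_r_bounds[of h] unfolding chain_eps_def by auto

lemma chain_eps_sum: "h > 0 \<Longrightarrow> (\<Sum>n\<le>N. chain_eps h n) \<le> 1"
proof -
  assume h: "h > 0"
  define r where "r = chain_r h"
  have r: "0 < r" "r < 1" using chain_r_bounds[OF h] r_def by auto
  have "(\<Sum>n\<le>N. chain_eps h n) = (1 - r) * (\<Sum>n\<le>N. r ^ n)"
    unfolding chain_eps_def r_def by (simp add: sum_distrib_left)
  also have "\<dots> = 1 - r ^ Suc N"
    by (simp only: one_diff_power_eq lessThan_Suc_atMost)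
  also have "\<dots> \<le> 1" using r by simp
  finally show ?thesis .
qed

lemma dyadic_bound:
  fixes f :: "real \<Rightarrow> real" and e :: "nat \<Rightarrow> real"
  assumes f0: "f 0 = 0" and e: "\<And>n. 0 \<le> e n"
    and inc: "\<And>n j. j < 2^n \<Longrightarrow> \<bar>f (real (Suc j) / 2^n) - f (real j / 2^n)\<bar> \<le> e n"
  shows "j \<le> 2^N \<Longrightarrow> \<bar>f (real j / 2^N)\<bar> \<le> (\<Sum>n\<le>N. e n)"
proof (induction N arbitrary: j)
  case 0
  then have "j = 0 \<or> j = 1" by auto
  then show ?case
  proof
    assume "j = 1" then show ?thesis using inc[of 0 0] f0 by simp
  qed (simp add: f0 e)
next
  case (Suc N)
  obtain i where i: "j = 2 * i \<or> j = 2 * i + 1" by (metis odd_two_times_div_two_succ dvd_mult_div_cancel)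
  have sN: "(\<Sum>n\<le>Suc N. e n) = (\<Sum>n\<le>N. e n) + e (Suc N)" by simp
  from i show ?case
  proof
    assume j: "j = 2 * i"
    then have "i \<le> 2^N" using Suc.prems by simp
    then have "\<bar>f (real i / 2^N)\<bar> \<le> (\<Sum>n\<le>N. e n)" by (rule Suc.IH)
    moreover have "real j / 2 ^ Suc N = real i / 2^N" using j by simp
    ultimately show ?thesis using sN e[of "Suc N"] by simp
  next
    assume j: "j = 2 * i + 1"
    then have "i < 2^N" using Suc.prems by simp
    then have "\<bar>f (real i / 2^N)\<bar> \<le> (\<Sum>n\<le>N. e n)" using Suc.IH by simp
    moreover have "real (2*i) / 2 ^ Suc N = real i / 2^N" by simp
    moreover have "\<bar>f (real (Suc (2*i)) / 2^Suc N) - f (real (2*i) / 2^Suc N)\<bar> \<le> e (Suc N)"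
      using \<open>i < 2^N\<close> by (intro inc) simp
    ultimately show ?thesis using sN j by simp
  qed
qed

lemma dyadic_approx:
  fixes t :: real assumes "0 \<le> t" "t \<le> 1"
  shows "(\<lambda>N. real (nat \<lfloor>t * 2^N\<rfloor>) / 2^N) \<longlonglongrightarrow> t"
    and "\<And>N. nat \<lfloor>t * 2^N\<rfloor> \<le> 2^N"
proof -
  show "nat \<lfloor>t * 2^N\<rfloor> \<le> 2^N" for N
  proof -
    have "t * 2^N \<le> 2^N" using assms by simp
    then have "\<lfloor>t * 2^N\<rfloor> \<le> 2^N" by (metis floor_le_numeral floor_mono floor_of_nat of_int_numeral of_nat_numeral floor_of_int of_int_of_nat_eq of_nat_power floor_power)
    then show ?thesis by (simp add: nat_le_iff)
  qed
  have le: "\<bar>real (nat \<lfloor>t * 2^N\<rfloor>) / 2^N - t\<bar> \<le> 1 / 2^N" for N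
  proof -
    have a: "real (nat \<lfloor>t * 2^N\<rfloor>) = of_int \<lfloor>t * 2^N\<rfloor>" using assms by simp
    have "of_int \<lfloor>t * 2^N\<rfloor> \<le> t * 2^N" "t * 2^N < of_int \<lfloor>t * 2^N\<rfloor> + 1" by linarith+
    then have b: "\<bar>of_int \<lfloor>t * 2^N\<rfloor> - t * 2^N\<bar> \<le> (1::real)" by linarith
    have "\<bar>of_int \<lfloor>t * 2^N\<rfloor> / 2^N - t\<bar> = \<bar>of_int \<lfloor>t * 2^N\<rfloor> - t * 2^N\<bar> / (2::real)^N"
      by (simp add: field_simps)
    also have "\<dots> \<le> 1 / 2^N" using b by (simp add: divide_right_mono)
    finally show ?thesis unfolding a .
  qed
  have "(\<lambda>N. 1 / (2::real)^N) \<longlonglongrightarrow> 0"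
    by (simp add: LIMSEQ_divide_realpow_zero)
  then have "(\<lambda>N. real (nat \<lfloor>t * 2^N\<rfloor>) / 2^N - t) \<longlonglongrightarrow> 0"
    by (rule Lim_null_comparison[rotated]) (use le in auto)
  then show "(\<lambda>N. real (nat \<lfloor>t * 2^N\<rfloor>) / 2^N) \<longlonglongrightarrow> t"
    by (simp add: LIM_zero_iff)
qed

lemma chain_path_bound:
  fixes f :: "real \<Rightarrow> real"
  assumes h: "h > 0" and y: "0 \<le> y" and f0: "f 0 = 0" and cont: "continuous_on UNIV f"
    and inc: "\<And>n j. j < 2^n \<Longrightarrow> \<bar>f (real (Suc j) / 2^n) - f (real j / 2^n)\<bar> \<le> y * chain_eps h n"
    and t: "0 \<le> t" "t \<le> 1"
  shows "\<bar>f t\<bar> \<le> y"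
proof -
  have dy: "\<bar>f (real j / 2^N)\<bar> \<le> y" if "j \<le> 2^N" for j N
  proof -
    have "\<bar>f (real j / 2^N)\<bar> \<le> (\<Sum>n\<le>N. y * chain_eps h n)"
      by (rule dyadic_bound[OF f0 _ inc that]) (use y chain_eps_nonneg[OF h] in auto)
    also have "\<dots> = y * (\<Sum>n\<le>N. chain_eps h n)" by (simp add: sum_distrib_left)
    also have "\<dots> \<le> y" using chain_eps_sum[OF h, of N] y by (simp add: mult_left_le)
    finally show ?thesis .
  qed
  have "(\<lambda>N. \<bar>f (real (nat \<lfloor>t * 2^N\<rfloor>) / 2^N)\<bar>) \<longlonglongrightarrow> \<bar>f t\<bar>"
    by (intro tendsto_rabs continuous_on_tendsto_compose[OF cont dyadic_approx(1)[OF t]]) auto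
  then show ?thesis
    by (rule LIMSEQ_le_const2) (use dy dyadic_approx(2)[OF t] in auto)
qed



lemma (in prob_space) measure_UN_bound:
  assumes A: "range A \<subseteq> sets M" and le: "\<And>i. measure M (A i) \<le> u i"
    and u0: "\<And>i. 0 \<le> u i" and su: "summable u"
  shows "measure M (\<Union>i. A i) \<le> (\<Sum>i. u i)"
proof -
  have "emeasure M (\<Union>i. A i) \<le> (\<Sum>i. emeasure M (A i))"
    by (rule emeasure_subadditive_countably[OF A])
  also have "\<dots> \<le> (\<Sum>i. ennreal (u i))"
    by (intro suminf_le) (auto simp: emeasure_eq_measure intro: ennreal_leI le)
  also have "\<dots> = ennreal (\<Sum>i. u i)" by (rule suminf_ennreal2[OF u0 su])
  finally have "ennreal (measure M (\<Union>i. A i)) \<le> ennreal (\<Sum>i. u i)"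
    by (simp add: emeasure_eq_measure)
  moreover have "0 \<le> (\<Sum>i. u i)" using su u0 by (simp add: suminf_nonneg)
  ultimately show ?thesis by (simp add: ennreal_le_iff)
qed

lemma fbm_facts:
  assumes "is_fbm M H W"
  shows "prob_space M" "\<And>t. W t \<in> borel_measurable M"
    "\<And>\<omega>. \<omega> \<in> space M \<Longrightarrow> continuous_on UNIV (\<lambda>t. W t \<omega>)"
    "\<And>\<omega>. \<omega> \<in> space M \<Longrightarrow> W 0 \<omega> = 0"
  using assms unfolding is_fbm_def by auto

lemma fbm_lin:
  assumes "is_fbm M H W" "finite I"
  shows "centered_gaussian M (\<lambda>\<omega>. \<Sum>t\<in>I. c t * W t \<omega>) (\<Sum>s\<in>I. \<Sum>t\<in>I. c s * c t * fbm_cov H s t)"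
  using assms unfolding is_fbm_def by blast

lemma fbm_single_gauss:
  assumes "is_fbm M H W"
  shows "centered_gaussian M (W t) (\<bar>t\<bar> powr (2*H))"
proof -
  have "centered_gaussian M (\<lambda>\<omega>. \<Sum>u\<in>{t}. (\<lambda>_. 1) u * W u \<omega>)
          (\<Sum>s\<in>{t}. \<Sum>u\<in>{t}. (\<lambda>_. 1) s * (\<lambda>_. 1) u * fbm_cov H s u)"
    by (rule fbm_lin[OF assms]) simp
  moreover have "(\<lambda>\<omega>. \<Sum>u\<in>{t}. (\<lambda>_. 1::real) u * W u \<omega>) = W t" by simp
  moreover have "(\<Sum>s\<in>{t}. \<Sum>u\<in>{t}. (\<lambda>_. 1::real) s * (\<lambda>_. 1) u * fbm_cov H s u) = \<bar>t\<bar> powr (2*H)"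
    by (simp add: fbm_cov_def)
  ultimately show ?thesis by simp
qed

lemma fbm_diff_gauss:
  assumes "is_fbm M H W" "s \<noteq> t"
  shows "centered_gaussian M (\<lambda>\<omega>. W t \<omega> - W s \<omega>) (\<bar>t - s\<bar> powr (2*H))"
proof -
  define c where "c = (\<lambda>u. if u = t then (1::real) else -1)"
  have A: "centered_gaussian M (\<lambda>\<omega>. \<Sum>u\<in>{t,s}. c u * W u \<omega>)
          (\<Sum>a\<in>{t,s}. \<Sum>b\<in>{t,s}. c a * c b * fbm_cov H a b)"
    by (rule fbm_lin[OF assms(1)]) simp
  have B: "(\<lambda>\<omega>. \<Sum>u\<in>{t,s}. c u * W u \<omega>) = (\<lambda>\<omega>. W t \<omega> - W s \<omega>)"
    using assms(2) by (auto simp: c_def)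
  have C: "(\<Sum>a\<in>{t,s}. \<Sum>b\<in>{t,s}. c a * c b * fbm_cov H a b) = \<bar>t - s\<bar> powr (2*H)"
  proof -
    have tt: "fbm_cov H t t = \<bar>t\<bar> powr (2*H)" and ss: "fbm_cov H s s = \<bar>s\<bar> powr (2*H)"
      by (simp_all add: fbm_cov_def)
    have st: "fbm_cov H s t = fbm_cov H t s" by (simp add: fbm_cov_def abs_minus_commute)
    have ts: "fbm_cov H t s = (\<bar>t\<bar> powr (2*H) + \<bar>s\<bar> powr (2*H) - \<bar>t - s\<bar> powr (2*H)) / 2"
      by (simp add: fbm_cov_def)
    have "(\<Sum>a\<in>{t,s}. \<Sum>b\<in>{t,s}. c a * c b * fbm_cov H a b)
          = fbm_cov H t t + fbm_cov H s s - 2 * fbm_cov H t s"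
      using assms(2) by (simp add: c_def st)
    moreover have "2 * ((\<bar>t\<bar> powr (2*H) + \<bar>s\<bar> powr (2*H) - \<bar>t - s\<bar> powr (2*H)) / 2)
       = \<bar>t\<bar> powr (2*H) + \<bar>s\<bar> powr (2*H) - \<bar>t - s\<bar> powr (2*H)" by simp
    ultimately show ?thesis unfolding tt ss ts by linarith
  qed
  show ?thesis using A unfolding B C .
qed

lemma fbm_single_tail:
  assumes "is_fbm M H W" "0 \<le> a"
  shows "measure M {\<omega>\<in>space M. a \<le> \<bar>W t \<omega>\<bar>} \<le> 2 * exp (-(a\<^sup>2) / (4 * \<bar>t\<bar> powr (2*H)))"
  by (rule gauss_tail[OF fbm_facts(1)[OF assms(1)] fbm_single_gauss[OF assms(1)] assms(2)])

lemma fbm_diff_tail: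
  assumes "is_fbm M H W" "0 \<le> a" "s \<noteq> t"
  shows "measure M {\<omega>\<in>space M. a \<le> \<bar>W t \<omega> - W s \<omega>\<bar>} \<le> 2 * exp (-(a\<^sup>2) / (4 * \<bar>t - s\<bar> powr (2*H)))"
  using gauss_tail[OF fbm_facts(1)[OF assms(1)] fbm_diff_gauss[OF assms(1) assms(3)] assms(2)] by simp

lemma div4_aux: "(A * B) / (4 * P) = A / 4 * (B / (P::real))" by simp

lemma chain_expo:
  assumes h: "h > 0"
  shows "(y * chain_eps h n)\<^sup>2 / (4 * (1 / 2^n) powr h)
         = (y\<^sup>2 * (1 - chain_r h)\<^sup>2 / 4) * (2 powr (h/2)) ^ n"
proof -
  define r where "r = chain_r h"
  have f1: "r ^ n = 2 powr (real n * (-h/4))"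
    unfolding r_def chain_r_def by (simp add: powr_power)
  have f2: "(1 / (2::real)^n) powr h = 2 powr (- (real n * h))"
  proof -
    have "1 / (2::real)^n = 2 powr (- real n)" by (simp add: powr_minus_divide powr_realpow)
    then show ?thesis by (simp add: powr_powr)
  qed
  have f3: "(2 powr (h/2)) ^ n = 2 powr (real n * (h/2))" by (simp add: powr_power)
  have f4: "(r ^ n)\<^sup>2 = 2 powr (- (real n * h / 2))"
    unfolding f1 power2_eq_square powr_add[symmetric] by (simp add: field_simps)
  have "(y * chain_eps h n)\<^sup>2 / (4 * (1 / 2^n) powr h) = y\<^sup>2 * (1 - r)\<^sup>2 / 4 * ((r ^ n)\<^sup>2 / (1 / 2^n) powr h)"
  proof -
    have "(y * chain_eps h n)\<^sup>2 = y\<^sup>2 * (1 - r)\<^sup>2 * (r ^ n)\<^sup>2"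
      unfolding chain_eps_def r_def by (simp only: power_mult_distrib mult.assoc)
    then show ?thesis by (simp only: div4_aux)
  qed
  also have "(r ^ n)\<^sup>2 / (1 / 2^n) powr h = (2 powr (h/2)) ^ n"
    unfolding f4 f2 f3
  proof (subst powr_diff[symmetric])
    show "2 powr (- (real n * h / 2) - - (real n * h)) = 2 powr (real n * (h / 2))"
      by (rule arg_cong[where f="\<lambda>x. 2 powr x"]) (simp add: algebra_simps)
  qed
  finally show ?thesis unfolding r_def .
qed



definition bad_chain :: "(real \<Rightarrow> 'a \<Rightarrow> real) \<Rightarrow> real \<Rightarrow> real \<Rightarrow> real \<Rightarrow> 'a \<Rightarrow> bool" where
  "bad_chain W h b y \<omega> \<longleftrightarrow> (\<exists>n j. j < (2::nat)^n \<and>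
      y * chain_eps h n < \<bar>W (b + real (Suc j) / 2^n) \<omega> - W (b + real j / 2^n) \<omega>\<bar>)"

lemma bad_chain_sets:
  assumes "\<And>t. W t \<in> borel_measurable M"
  shows "{\<omega>\<in>space M. bad_chain W h b y \<omega>} \<in> sets M"
proof -
  have eq: "{\<omega>\<in>space M. bad_chain W h b y \<omega>} = (\<Union>n. \<Union>j\<in>{..<(2::nat)^n}.
     {\<omega>\<in>space M. y * chain_eps h n < \<bar>W (b + real (Suc j) / 2^n) \<omega> - W (b + real j / 2^n) \<omega>\<bar>})"
    unfolding bad_chain_def by auto
  have m: "{\<omega>\<in>space M. c < \<bar>W t \<omega> - W s \<omega>\<bar>} \<in> sets M" for c t s
  proof -
    note assms[measurable]
    show ?thesis by measurable
  qed
  show ?thesis unfolding eq by (auto intro!: sets.countable_UN sets.finite_UN m)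
qed

lemma bad_chain_good:
  assumes "is_fbm M H W" "\<omega> \<in> space M" "h > 0" "0 \<le> y" "\<not> bad_chain W h b y \<omega>"
    and t: "0 \<le> t" "t \<le> 1"
  shows "\<bar>W (b + t) \<omega> - W b \<omega>\<bar> \<le> y"
proof -
  define f where "f = (\<lambda>s. W (b + s) \<omega> - W b \<omega>)"
  have "continuous_on UNIV (\<lambda>t. W t \<omega>)" using fbm_facts(3)[OF assms(1,2)] .
  then have "continuous_on UNIV (\<lambda>s. W (b + s) \<omega>)"
    using continuous_on_compose2[of UNIV "\<lambda>t. W t \<omega>" UNIV "\<lambda>s. b + s"] continuous_on_add[OF continuous_on_const continuous_on_id]
    by auto
  then have c: "continuous_on UNIV f" unfolding f_def
    by (intro continuous_on_diff continuous_on_const)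
  have "\<bar>f t\<bar> \<le> y"
  proof (rule chain_path_bound[OF assms(3,4) _ c _ t])
    show "f 0 = 0" by (simp add: f_def)
    fix n j :: nat assume "j < 2^n"
    then show "\<bar>f (real (Suc j) / 2^n) - f (real j / 2^n)\<bar> \<le> y * chain_eps h n"
      using assms(5) unfolding bad_chain_def f_def by (auto simp: not_less) (metis linorder_not_le)
  qed
  then show ?thesis by (simp add: f_def)
qed

lemma chain_term_bound:
  fixes a \<rho> :: real
  assumes "1 < \<rho>" "ln 4 / (\<rho> - 1) \<le> a"
  shows "2^n * (2 * exp (-(a * \<rho>^n))) \<le> 2 * exp (-a) * (1/2)^n"
proof -
  have a0: "0 \<le> a" using assms by (smt (verit) divide_pos_pos ln_gt_zero)
  have "1 + real n * (\<rho> - 1) \<le> (1 + (\<rho> - 1))^n"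
    by (rule Bernoulli_inequality) (use assms in auto)
  then have b: "1 + real n * (\<rho> - 1) \<le> \<rho>^n" by simp
  have "ln 4 \<le> a * (\<rho> - 1)" using assms by (simp add: field_simps)
  then have "a + real n * ln 4 \<le> a + real n * (a * (\<rho> - 1))"
    by (simp add: mult_left_mono)
  also have "\<dots> = a * (1 + real n * (\<rho> - 1))" by (simp add: algebra_simps)
  also have "\<dots> \<le> a * \<rho>^n" using b a0 by (rule mult_left_mono)
  finally have "exp (-(a * \<rho>^n)) \<le> exp (-(a + real n * ln 4))" by simp
  also have "\<dots> = exp (-a) / 4^n"
  proof -
    have "exp (real n * ln 4) = 4 ^ n" by (subst exp_of_nat_mult) simp
    then show ?thesis by (simp add: exp_diff exp_add exp_minus field_simps)
  qed
  finally have e: "exp (-(a * \<rho>^n)) \<le> exp (-a) / 4^n" .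
  have "2^n * (2 * exp (-(a * \<rho>^n))) \<le> 2^n * (2 * (exp (-a) / 4^n))"
    by (intro mult_left_mono e) auto
  also have "\<dots> = 2 * exp (-a) * (2^n / 4^n)" by simp
  also have "(2::real)^n / 4^n = (1/2)^n" by (simp add: power_divide[symmetric])
  finally show ?thesis .
qed



lemma diff_gt_sets:
  fixes W :: "real \<Rightarrow> 'a \<Rightarrow> real" and c :: real
  assumes "\<And>t. W t \<in> borel_measurable M"
  shows "{\<omega>\<in>space M. c < \<bar>W t \<omega> - W s \<omega>\<bar>} \<in> sets M"
    "{\<omega>\<in>space M. c \<le> \<bar>W t \<omega> - W s \<omega>\<bar>} \<in> sets M"
    "{\<omega>\<in>space M. c < \<bar>W t \<omega>\<bar>} \<in> sets M"
    "{\<omega>\<in>space M. c \<le> \<bar>W t \<omega>\<bar>} \<in> sets M"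
proof -
  have f1: "(\<lambda>\<omega>. \<bar>W t \<omega> - W s \<omega>\<bar>) \<in> borel_measurable M"
    by (intro borel_measurable_abs borel_measurable_diff assms)
  have f2: "(\<lambda>\<omega>. \<bar>W t \<omega>\<bar>) \<in> borel_measurable M"
    by (intro borel_measurable_abs assms)
  note f = f1 f2
  show "{\<omega>\<in>space M. c < \<bar>W t \<omega> - W s \<omega>\<bar>} \<in> sets M"
    using f(1) by (simp add: borel_measurable_iff_greater)
  show "{\<omega>\<in>space M. c \<le> \<bar>W t \<omega> - W s \<omega>\<bar>} \<in> sets M"
    using f(1) by (simp add: borel_measurable_iff_ge)
  show "{\<omega>\<in>space M. c < \<bar>W t \<omega>\<bar>} \<in> sets M"
    using f(2) by (simp add: borel_measurable_iff_greater)
  show "{\<omega>\<in>space M. c \<le> \<bar>W t \<omega>\<bar>} \<in> sets M"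
    using f(2) by (simp add: borel_measurable_iff_ge)
qed

lemma chain_prob:
  assumes F: "is_fbm M H W" and H: "0 < H"
  shows "\<exists>K c. 0 < c \<and> (\<forall>b y. 0 \<le> y \<longrightarrow>
           measure M {\<omega>\<in>space M. bad_chain W (2*H) b y \<omega>} \<le> K * exp (-(c * y\<^sup>2)))"
proof -
  interpret prob_space M using fbm_facts(1)[OF F] .
  have Wm: "\<And>t. W t \<in> borel_measurable M" using fbm_facts(2)[OF F] .
  define h where "h = 2 * H"
  have h: "h > 0" using H h_def by simp
  define r where "r = chain_r h"
  have r: "0 < r" "r < 1" using chain_r_bounds[OF h] r_def by auto
  define \<rho> where "\<rho> = (2::real) powr (h/2)"
  have \<rho>: "1 < \<rho>" unfolding \<rho>_def using powr_less_mono[of 0 "h/2" 2] h by simp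
  define c where "c = (1 - r)\<^sup>2 / 4"
  have "0 < (1 - r)\<^sup>2" using r by simp
  then have c: "0 < c" unfolding c_def by (simp only: divide_pos_pos zero_less_numeral)
  define a0 where "a0 = ln 4 / (\<rho> - 1)"
  define K where "K = 4 + exp a0"
  have "\<forall>b y. 0 \<le> y \<longrightarrow> measure M {\<omega>\<in>space M. bad_chain W h b y \<omega>} \<le> K * exp (-(c * y\<^sup>2))"
  proof (intro allI impI)
    fix b y :: real assume y: "0 \<le> y"
    define a where "a = c * y\<^sup>2"
    have a0': "0 \<le> a" using c y a_def by simp
    define B where "B n j = {\<omega>\<in>space M. y * chain_eps h n < \<bar>W (b + real (Suc j) / 2^n) \<omega> - W (b + real j / 2^n) \<omega>\<bar>}" for n j :: nat
    define A where "A n = (\<Union>j\<in>{..<(2::nat)^n}. B n j)" for n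
    have S: "{\<omega>\<in>space M. bad_chain W h b y \<omega>} = (\<Union>n. A n)"
      unfolding A_def B_def bad_chain_def by auto
    have Bs: "B n j \<in> sets M" for n j unfolding B_def by (rule diff_gt_sets(1)[OF Wm])
    have As: "A n \<in> sets M" for n unfolding A_def using Bs by auto
    have Bb: "measure M (B n j) \<le> 2 * exp (-(a * \<rho>^n))" for n j
    proof -
      have "measure M (B n j) \<le> measure M {\<omega>\<in>space M. y * chain_eps h n \<le> \<bar>W (b + real (Suc j) / 2^n) \<omega> - W (b + real j / 2^n) \<omega>\<bar>}"
        unfolding B_def by (intro finite_measure_mono diff_gt_sets(2)[OF Wm]) auto
      also have "\<dots> \<le> 2 * exp (-((y * chain_eps h n)\<^sup>2) / (4 * \<bar>(b + real (Suc j) / 2^n) - (b + real j / 2^n)\<bar> powr (2*H)))"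
        by (rule fbm_diff_tail[OF F]) (use y chain_eps_nonneg[OF h] in \<open>auto simp: field_simps\<close>)
      also have "\<bar>(b + real (Suc j) / 2^n) - (b + real j / 2^n)\<bar> = 1 / 2^n"
        by (simp add: field_simps)
      also have "-((y * chain_eps h n)\<^sup>2) / (4 * (1 / 2^n) powr (2*H)) = -(a * \<rho>^n)"
        using chain_expo[OF h, of y n] unfolding a_def c_def \<rho>_def r_def h_def
        by (simp add: field_simps)
      finally show ?thesis .
    qed
    have Ab: "measure M (A n) \<le> 2^n * (2 * exp (-(a * \<rho>^n)))" for n
    proof -
      have "measure M (A n) \<le> (\<Sum>j\<in>{..<(2::nat)^n}. measure M (B n j))"
        unfolding A_def by (rule measure_UNION_le) (auto intro: Bs)
      also have "\<dots> \<le> of_nat (card {..<(2::nat)^n}) * (2 * exp (-(a * \<rho>^n)))"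
        by (rule sum_bounded_above) (rule Bb)
      finally show ?thesis by simp
    qed
    show "measure M {\<omega>\<in>space M. bad_chain W h b y \<omega>} \<le> K * exp (-(c * y\<^sup>2))"
    proof (cases "a0 \<le> a")
      case True
      define u where "u n = 2 * exp (-a) * (1/2::real)^n" for n
      have su: "summable u" unfolding u_def by (intro summable_mult summable_geometric) simp
      have "measure M (\<Union>n. A n) \<le> (\<Sum>n. u n)"
      proof (rule measure_UN_bound)
        show "range A \<subseteq> sets M" using As by auto
        show "measure M (A n) \<le> u n" for n
          using Ab[of n] chain_term_bound[OF \<rho>, of a n] True unfolding u_def a0_def by linarith
        show "0 \<le> u n" for n unfolding u_def by simp
      qed (rule su)
      also have "(\<Sum>n. u n) = 4 * exp (-a)"
        unfolding u_def by (subst suminf_mult) (auto simp: suminf_geometric)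
      also have "\<dots> \<le> K * exp (-(c * y\<^sup>2))" unfolding K_def a_def by (simp add: distrib_right)
      finally show ?thesis unfolding S .
    next
      case False
      have "measure M {\<omega>\<in>space M. bad_chain W h b y \<omega>} \<le> 1" by (rule prob_le_1)
      also have "1 \<le> exp (a0 - a)" using False by simp
      also have "\<dots> = exp a0 * exp (-(c * y\<^sup>2))" unfolding a_def by (simp add: exp_diff exp_minus field_simps)
      also have "\<dots> \<le> K * exp (-(c * y\<^sup>2))" unfolding K_def by (intro mult_right_mono) auto
      finally show ?thesis .
    qed
  qed
  then show ?thesis using c unfolding h_def by blast
qed



lemma exp_ge_pow_bound:
  fixes X :: real and N :: nat
  assumes "0 \<le> X" "N > 0"
  shows "(X / N) ^ N \<le> exp X"
proof -
  have "exp X = exp (real N * (X / N))" using assms by simp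
  also have "\<dots> = exp (X / N) ^ N" by (rule exp_of_nat_mult)
  finally have e: "exp X = exp (X / N) ^ N" .
  have "X / N \<le> exp (X / N)" using exp_ge_add_one_self[of "X / N"] by linarith
  then have "(X / N) ^ N \<le> exp (X / N) ^ N" by (rule power_mono) (use assms in simp)
  then show ?thesis using e by simp
qed

lemma summable_pexp:
  fixes \<gamma> h :: real and p :: nat
  assumes g: "\<gamma> > 0" and h: "h > 0"
  shows "summable (\<lambda>i::nat. (real i + 1) ^ p * exp (-(\<gamma> * real i powr h)))"
proof -
  define N :: nat where "N = nat \<lceil>(real p + 2) / h\<rceil> + 1"
  have N: "N > 0" unfolding N_def by simp
  have Nh: "real p + 2 \<le> real N * h"
  proof -
    have "(real p + 2) / h \<le> real N" unfolding N_def by linarith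
    then show ?thesis using h by (simp add: field_simps)
  qed
  define D0 where "D0 = (\<gamma> / N) ^ N"
  have D0: "D0 > 0" unfolding D0_def using g N by simp
  define C where "C = 2 ^ p / D0"
  show ?thesis
  proof (rule summable_comparison_test'[where N=1])
    show "summable (\<lambda>i::nat. C * inverse (real i ^ 2))"
      by (intro summable_mult inverse_power_summable) simp
    fix i :: nat assume i: "1 \<le> i"
    then have ir: "1 \<le> real i" by simp
    define X where "X = \<gamma> * real i powr h"
    have X0: "0 \<le> X" unfolding X_def using g by simp
    have eq0: "(X / N) ^ N = D0 * (real i powr h) ^ N"
      unfolding X_def D0_def by (simp add: power_mult_distrib field_simps)
    have eq1: "(real i powr h) ^ N = real i powr (real N * h)"
      using i by (simp add: powr_power)
    have ge: "real i powr (real N * h) \<ge> real i powr (real (p + 2))"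
      using ir Nh by (intro powr_mono) auto
    have e: "real i powr real (p + 2) = real i ^ (p + 2)" by (rule powr_realpow) (use i in simp)
    have ge2: "real i ^ (p + 2) \<le> real i powr (real N * h)"
      using ge unfolding e .
    have lowX: "D0 * real i ^ (p + 2) \<le> (X / N) ^ N"
      unfolding eq0 eq1 by (intro mult_left_mono ge2) (use D0 in simp)
    then have lowexp: "D0 * real i ^ (p + 2) \<le> exp X"
      using exp_ge_pow_bound[OF X0 N] by linarith
    have pos: "0 < D0 * real i ^ (p + 2)" using D0 i by simp
    have "norm ((real i + 1) ^ p * exp (-(\<gamma> * real i powr h))) = (real i + 1) ^ p / exp X"
      unfolding X_def by (simp add: exp_minus field_simps)
    also have "\<dots> \<le> (2 * real i) ^ p / exp X"
      by (intro divide_right_mono power_mono) (use ir in auto)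
    also have "\<dots> \<le> (2 * real i) ^ p / (D0 * real i ^ (p + 2))"
      by (intro divide_left_mono lowexp mult_pos_pos pos) simp_all
    also have "\<dots> = C * inverse (real i ^ 2)"
      unfolding C_def using i D0 by (simp add: power_mult_distrib power_add field_simps power2_eq_square)
    finally show "norm ((real i + 1) ^ p * exp (-(\<gamma> * real i powr h))) \<le> C * inverse (real i ^ 2)" .
  qed
qed



definition S1 :: "real \<Rightarrow> real" where
  "S1 h = (\<Sum>i. 2 * ((real i + 1) ^ 1 * exp (-(1/8 * real i powr h))))"

lemma S1_summable: "h > 0 \<Longrightarrow> summable (\<lambda>i. 2 * ((real i + 1) ^ 1 * exp (-(1/8 * real i powr h))))"
  by (intro summable_mult summable_pexp) auto

lemma S1_nonneg: "h > 0 \<Longrightarrow> 0 \<le> S1 h"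
  unfolding S1_def by (intro suminf_nonneg S1_summable) auto

lemma ennreal_le_suminf: "(f i :: ennreal) \<le> (\<Sum>n. f n)"
  using sum_le_suminf[of f "{i}"] by auto

lemma ennreal_mult_le: "0 \<le> a \<Longrightarrow> 0 \<le> b \<Longrightarrow> x \<le> a * b \<Longrightarrow> ennreal x \<le> ennreal a * ennreal b"
  by (metis ennreal_leI ennreal_mult)

lemma tail_integral_bound:
  fixes Z :: "real \<Rightarrow> real" and m :: nat
  assumes h: "0 < h" and Zm: "Z \<in> borel_measurable borel" and Z0: "\<And>t. 0 \<le> Z t"
    and ZA: "\<And>t. real m \<le> \<bar>t\<bar> \<Longrightarrow> Z t \<le> exp (1/4) * exp (-(\<bar>t\<bar> powr h / 4))"
  shows "(\<integral>\<^sup>+t. ennreal (\<bar>t\<bar> * Z t) \<partial>lborel)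
     \<le> ennreal (real m) * (\<integral>\<^sup>+t. ennreal (Z t) \<partial>lborel) + ennreal (exp (1/4) * exp (-(real m powr h / 8)) * S1 h)"
proof -
  define \<kappa> where "\<kappa> i = (if m \<le> i then (real i + 1) * exp (1/4) * exp (-(real i powr h / 4)) else 0)" for i :: nat
  have \<kappa>0: "0 \<le> \<kappa> i" for i unfolding \<kappa>_def by simp
  define blk :: "nat \<Rightarrow> real \<Rightarrow> ennreal" where "blk i t = indicator {real i .. real i + 1} t + indicator {-(real i + 1) .. - real i} t" for i t
  have pw: "ennreal (\<bar>t\<bar> * Z t) \<le> ennreal (real m) * ennreal (Z t) + (\<Sum>i. ennreal (\<kappa> i) * blk i t)" for t
  proof (cases "real m \<le> \<bar>t\<bar>")
    case False
    then have "\<bar>t\<bar> * Z t \<le> real m * Z t" using Z0 by (intro mult_right_mono) auto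
    then have "ennreal (\<bar>t\<bar> * Z t) \<le> ennreal (real m) * ennreal (Z t)"
      by (intro ennreal_mult_le Z0) auto
    then show ?thesis by (rule order_trans) simp
  next
    case True
    define i where "i = nat \<lfloor>\<bar>t\<bar>\<rfloor>"
    have i1: "real i \<le> \<bar>t\<bar>" "\<bar>t\<bar> < real i + 1" unfolding i_def by linarith+
    have mi: "m \<le> i" unfolding i_def using True by linarith
    have "\<bar>t\<bar> * Z t \<le> (real i + 1) * (exp (1/4) * exp (-(\<bar>t\<bar> powr h / 4)))"
      using i1 Z0 ZA[OF True] by (intro mult_mono) auto
    also have "exp (-(\<bar>t\<bar> powr h / 4)) \<le> exp (-(real i powr h / 4))"
      using i1 h by (simp add: powr_mono2)
    finally have "\<bar>t\<bar> * Z t \<le> \<kappa> i"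
      unfolding \<kappa>_def using mi by (simp add: mult_left_mono)
    moreover have "1 \<le> blk i t" unfolding blk_def using i1 by (cases "0 \<le> t") (auto simp: indicator_def)
    ultimately have "ennreal (\<bar>t\<bar> * Z t) \<le> ennreal (\<kappa> i) * blk i t"
      using \<kappa>0 by (metis ennreal_leI mult.right_neutral mult_left_mono zero_le order_trans) 
    also have "\<dots> \<le> (\<Sum>i. ennreal (\<kappa> i) * blk i t)" by (rule ennreal_le_suminf)
    finally show ?thesis by (rule order_trans) simp
  qed
  have blkm: "(\<lambda>t. ennreal (\<kappa> i) * blk i t) \<in> borel_measurable borel" for i
    unfolding blk_def by measurable
  have "(\<integral>\<^sup>+t. ennreal (\<bar>t\<bar> * Z t) \<partial>lborel)
      \<le> (\<integral>\<^sup>+t. ennreal (real m) * ennreal (Z t) + (\<Sum>i. ennreal (\<kappa> i) * blk i t) \<partial>lborel)"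
    by (rule nn_integral_mono) (rule pw)
  also have "\<dots> = ennreal (real m) * (\<integral>\<^sup>+t. ennreal (Z t) \<partial>lborel) + (\<Sum>i. \<integral>\<^sup>+t. ennreal (\<kappa> i) * blk i t \<partial>lborel)"
    using Zm blkm by (simp add: nn_integral_add nn_integral_cmult nn_integral_suminf)
  also have "(\<Sum>i. \<integral>\<^sup>+t. ennreal (\<kappa> i) * blk i t \<partial>lborel) = (\<Sum>i. ennreal (2 * \<kappa> i))"
  proof (rule suminf_cong)
    fix i
    have "(\<integral>\<^sup>+t. ennreal (\<kappa> i) * blk i t \<partial>lborel)
       = ennreal (\<kappa> i) * (\<integral>\<^sup>+t. indicator {real i .. real i + 1} t + indicator {-(real i + 1) .. - real i} t \<partial>lborel)"
      unfolding blk_def by (rule nn_integral_cmult) measurable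
    also have "\<dots> = ennreal (\<kappa> i) * 2"
      by (simp add: nn_integral_add one_add_one)
    finally show "(\<integral>\<^sup>+t. ennreal (\<kappa> i) * blk i t \<partial>lborel) = ennreal (2 * \<kappa> i)"
      using \<kappa>0 by (simp add: ennreal_mult mult.commute)
  qed
  also have "(\<Sum>i. ennreal (2 * \<kappa> i)) \<le> ennreal (exp (1/4) * exp (-(real m powr h / 8)) * S1 h)"
  proof -
    define c0 where "c0 = exp (1/4) * exp (-(real m powr h / 8))"
    have le: "2 * \<kappa> i \<le> c0 * (2 * ((real i + 1) ^ 1 * exp (-(1/8 * real i powr h))))" for i
    proof (cases "m \<le> i")
      case True
      have "real m powr h \<le> real i powr h" using True h by (intro powr_mono2) auto
      then have "exp (-(real i powr h / 4)) \<le> exp (-(real m powr h / 8)) * exp (-(1/8 * real i powr h))"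
        by (simp add: exp_add[symmetric])
      then show ?thesis unfolding \<kappa>_def c0_def using True
        by (simp add: mult_left_mono mult.assoc mult.left_commute)
    qed (simp add: \<kappa>_def c0_def)
    have s2: "summable (\<lambda>i. c0 * (2 * ((real i + 1) ^ 1 * exp (-(1/8 * real i powr h)))))"
      by (intro summable_mult S1_summable h)
    have s1: "summable (\<lambda>i. 2 * \<kappa> i)"
      by (rule summable_comparison_test'[OF s2]) (use \<kappa>0 le in auto)
    have "(\<Sum>i. ennreal (2 * \<kappa> i)) = ennreal (\<Sum>i. 2 * \<kappa> i)"
      by (rule suminf_ennreal2[OF _ s1]) (use \<kappa>0 in auto)
    also have "(\<Sum>i. 2 * \<kappa> i) \<le> (\<Sum>i. c0 * (2 * ((real i + 1) ^ 1 * exp (-(1/8 * real i powr h)))))"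
      by (rule suminf_le[OF le s1 s2])
    also have "\<dots> = c0 * S1 h" unfolding S1_def by (rule suminf_mult[OF S1_summable[OF h]])
    finally show ?thesis unfolding c0_def by (simp add: ennreal_leI)
  qed
  finally show ?thesis by (simp add: add_left_mono)
qed



lemma zeta_det:
  fixes w :: "real \<Rightarrow> real" and m :: nat
  assumes h: "0 < h" and m: "1 \<le> m" and wm: "w \<in> borel_measurable borel"
    and A1: "\<And>t. 0 \<le> t \<Longrightarrow> t \<le> 1 \<Longrightarrow> \<bar>w t\<bar> \<le> real m powr h / 32"
    and A2: "\<And>t. real m \<le> \<bar>t\<bar> \<Longrightarrow> w t \<le> (\<bar>t\<bar> powr h + 1) / 4"
  shows "\<bar>\<integral>t. t * (exp (w t - \<bar>t\<bar> powr h / 2) / (\<integral>u. exp (w u - \<bar>u\<bar> powr h / 2) \<partial>lborel)) \<partial>lborel\<bar>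
           \<le> real m + exp (3/4) * S1 h"
proof -
  define Z where "Z t = exp (w t - \<bar>t\<bar> powr h / 2)" for t
  define I where "I = (\<integral>u. Z u \<partial>lborel)"
  have Zm: "Z \<in> borel_measurable borel" unfolding Z_def using wm by measurable
  have Z0: "0 \<le> Z t" for t unfolding Z_def by simp
  have S0: "0 \<le> S1 h" by (rule S1_nonneg[OF h])
  have goal: "\<bar>\<integral>t. t * (Z t / I) \<partial>lborel\<bar> \<le> real m + exp (3/4) * S1 h"
  proof (cases "integrable lborel Z")
    case False
    then have "I = 0" unfolding I_def by (rule not_integrable_integral_eq)
    then show ?thesis using S0 by simp
  next
    case True
    have Ienn: "(\<integral>\<^sup>+t. ennreal (Z t) \<partial>lborel) = ennreal I"
      unfolding I_def by (rule nn_integral_eq_integral[OF True]) (simp add: Z0)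
    define L where "L = exp (-(real m powr h / 32) - 1/2)"
    have L0: "0 < L" unfolding L_def by simp
    have "ennreal L = (\<integral>\<^sup>+t. ennreal L * indicator {0..1::real} t \<partial>lborel)"
      by (subst nn_integral_cmult_indicator) auto
    also have "\<dots> \<le> (\<integral>\<^sup>+t. ennreal (Z t) \<partial>lborel)"
    proof (rule nn_integral_mono)
      fix t :: real
      show "ennreal L * indicator {0..1} t \<le> ennreal (Z t)"
      proof (cases "t \<in> {0..1}")
        case True
        then have "\<bar>w t\<bar> \<le> real m powr h / 32" using A1 by auto
        moreover have "\<bar>t\<bar> powr h \<le> 1" using True h by (intro powr_le1) auto
        ultimately have "L \<le> Z t" unfolding L_def Z_def by simp
        then show ?thesis using True by (simp add: ennreal_leI)
      qed simp
    qed
    finally have IL: "L \<le> I" unfolding Ienn using Z0 L0 by (simp add: ennreal_le_iff2 ennreal_le_iff)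
    have Ipos: "0 < I" using IL L0 by linarith
    define T0 where "T0 = exp (1/4) * exp (-(real m powr h / 8)) * S1 h"
    have T00: "0 \<le> T0" unfolding T0_def using S0 by simp
    have ZA: "Z t \<le> exp (1/4) * exp (-(\<bar>t\<bar> powr h / 4))" if "real m \<le> \<bar>t\<bar>" for t
    proof -
      have "w t - \<bar>t\<bar> powr h / 2 \<le> 1/4 + (-(\<bar>t\<bar> powr h / 4))" using A2[OF that] by simp
      then show ?thesis unfolding Z_def exp_add[symmetric] by simp
    qed
    have E: "(\<integral>\<^sup>+t. ennreal (\<bar>t\<bar> * Z t) \<partial>lborel) \<le> ennreal (real m) * ennreal I + ennreal T0"
      using tail_integral_bound[OF h Zm Z0 ZA] unfolding Ienn T0_def by simp
    show ?thesis
    proof (cases "integrable lborel (\<lambda>t. t * (Z t / I))")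
      case False
      then have z: "(\<integral>t. t * (Z t / I) \<partial>lborel) = 0" by (rule not_integrable_integral_eq)
      show ?thesis unfolding z using S0 by simp
    next
      case True
      have "ennreal (\<bar>\<integral>t. t * (Z t / I) \<partial>lborel\<bar>) \<le> (\<integral>\<^sup>+t. norm (t * (Z t / I)) \<partial>lborel)"
        using integral_norm_bound_ennreal[OF True] by simp
      also have "\<dots> = (\<integral>\<^sup>+t. ennreal (\<bar>t\<bar> * Z t) * ennreal (1 / I) \<partial>lborel)"
        using Ipos Z0 by (intro nn_integral_cong) (simp add: ennreal_mult[symmetric] abs_mult)
      also have "\<dots> = (\<integral>\<^sup>+t. ennreal (\<bar>t\<bar> * Z t) \<partial>lborel) * ennreal (1 / I)"
        using Zm by (intro nn_integral_multc) measurable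
      also have "\<dots> \<le> (ennreal (real m) * ennreal I + ennreal T0) * ennreal (1 / I)"
        by (intro mult_right_mono E) simp
      also have "\<dots> = ennreal (real m + T0 / I)"
        using Ipos T00 by (simp add: ennreal_mult[symmetric] ennreal_plus[symmetric] field_simps del: ennreal_plus)
      finally have b1: "\<bar>\<integral>t. t * (Z t / I) \<partial>lborel\<bar> \<le> real m + T0 / I"
        using Ipos T00 by (subst (asm) ennreal_le_iff) auto
      have "T0 / I \<le> T0 / L" using IL L0 T00 by (intro divide_left_mono) auto
      also have "T0 / L = exp (3/4) * (exp (-(real m powr h / 8) + real m powr h / 32) * S1 h)"
      proof -
        define x where "x = real m powr h"
        have "exp (1/4) * exp (-(x / 8)) / exp (-(x / 32) - 1/2) = exp (3/4) * exp (-(x / 8) + x / 32)"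
          by (simp only: exp_add[symmetric] exp_diff[symmetric]) (rule arg_cong[where f=exp], simp)
        then show ?thesis unfolding T0_def L_def x_def[symmetric] by (simp add: field_simps)
      qed
      also have "\<dots> \<le> exp (3/4) * (1 * S1 h)"
      proof -
        have "0 \<le> real m powr h" by simp
        then have "exp (-(real m powr h / 8) + real m powr h / 32) \<le> 1" by simp
        then show ?thesis using S0 by (intro mult_left_mono mult_right_mono) auto
      qed
      finally show ?thesis using b1 by simp
    qed
  qed
  then show ?thesis unfolding Z_def I_def .
qed



lemma powr_add_le4:
  fixes x y h :: real
  assumes "0 \<le> x" "0 \<le> y" "0 < h" "h \<le> 2"
  shows "(x + y) powr h \<le> 4 * (x powr h + y powr h)"
proof -
  have two: "(2::real) powr h \<le> 4"
  proof -
    have "(2::real) powr h \<le> 2 powr 2" using assms by (intro powr_mono) auto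
    then show ?thesis by simp
  qed
  have "x + y \<le> 2 * max x y" by simp
  then have "(x + y) powr h \<le> (2 * max x y) powr h" using assms by (intro powr_mono2) auto
  also have "\<dots> = 2 powr h * max x y powr h" using assms by (simp add: powr_mult)
  also have "\<dots> \<le> 4 * max x y powr h" using two by (intro mult_right_mono) auto
  also have "max x y powr h \<le> x powr h + y powr h" by (cases "x \<le> y") (auto simp: max_def)
  finally show ?thesis by simp
qed

lemma aux16: "a \<le> b \<Longrightarrow> 0 \<le> b \<Longrightarrow> a / 16 \<le> (b + 1) / (4::real)" by (simp add: field_simps)

definition badset :: "'a measure \<Rightarrow> (real \<Rightarrow> 'a \<Rightarrow> real) \<Rightarrow> real \<Rightarrow> nat \<Rightarrow> 'a set" where
  "badset M W h m = {\<omega>\<in>space M. bad_chain W h 0 (real m powr h / 32) \<omega> \<or>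
     (\<exists>i\<ge>m. (\<exists>b\<in>{real i, -(real i + 1)}. \<bar>b\<bar> powr h / 32 < \<bar>W b \<omega>\<bar> \<or> bad_chain W h b (\<bar>b\<bar> powr h / 32) \<omega>))}"

lemma good_A:
  assumes F: "is_fbm M H W" and H: "0 < H" "H \<le> 1" and \<omega>: "\<omega> \<in> space M" and nb: "\<omega> \<notin> badset M W (2*H) m"
    and m: "1 \<le> m"
  shows "\<And>t. 0 \<le> t \<Longrightarrow> t \<le> 1 \<Longrightarrow> \<bar>W t \<omega>\<bar> \<le> real m powr (2*H) / 32"
    and "\<And>t. real m \<le> \<bar>t\<bar> \<Longrightarrow> W t \<omega> \<le> (\<bar>t\<bar> powr (2*H) + 1) / 4"
proof -
  define h where "h = 2 * H"
  have h: "0 < h" "h \<le> 2" using H h_def by auto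
  have W0: "W 0 \<omega> = 0" using fbm_facts(4)[OF F \<omega>] .
  have nb': "\<not> bad_chain W h 0 (real m powr h / 32) \<omega>"
    "\<And>i b. m \<le> i \<Longrightarrow> b \<in> {real i, -(real i + 1)} \<Longrightarrow> \<bar>W b \<omega>\<bar> \<le> \<bar>b\<bar> powr h / 32"
    "\<And>i b. m \<le> i \<Longrightarrow> b \<in> {real i, -(real i + 1)} \<Longrightarrow> \<not> bad_chain W h b (\<bar>b\<bar> powr h / 32) \<omega>"
    using nb \<omega> unfolding badset_def h_def[symmetric] by (auto simp: not_less)
  show "\<bar>W t \<omega>\<bar> \<le> real m powr (2*H) / 32" if "0 \<le> t" "t \<le> 1" for t
    using bad_chain_good[OF F \<omega> h(1) _ nb'(1) that] W0 unfolding h_def by simp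
  have blk: "\<bar>W t \<omega>\<bar> \<le> \<bar>b\<bar> powr h / 16" if "m \<le> i" "b \<in> {real i, -(real i + 1)}" "0 \<le> t - b" "t - b \<le> 1" for i b t
  proof -
    have "\<bar>W (b + (t - b)) \<omega> - W b \<omega>\<bar> \<le> \<bar>b\<bar> powr h / 32"
      by (rule bad_chain_good[OF F \<omega> h(1) _ nb'(3)[OF that(1,2)] that(3,4)]) simp
    then have "\<bar>W t \<omega> - W b \<omega>\<bar> \<le> \<bar>b\<bar> powr h / 32" by simp
    moreover have "\<bar>W b \<omega>\<bar> \<le> \<bar>b\<bar> powr h / 32" by (rule nb'(2)[OF that(1,2)])
    ultimately show ?thesis by linarith
  qed
  show "W t \<omega> \<le> (\<bar>t\<bar> powr (2*H) + 1) / 4" if tm: "real m \<le> \<bar>t\<bar>" for t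
  proof -
    define i where "i = nat \<lfloor>\<bar>t\<bar>\<rfloor>"
    have i1: "real i \<le> \<bar>t\<bar>" "\<bar>t\<bar> < real i + 1" unfolding i_def by linarith+
    have mi: "m \<le> i" unfolding i_def using tm by linarith
    have "\<bar>W t \<omega>\<bar> \<le> (\<bar>t\<bar> powr h + 1) / 4"
    proof (cases "0 \<le> t")
      case True
      have "\<bar>W t \<omega>\<bar> \<le> \<bar>real i\<bar> powr h / 16"
        by (rule blk[OF mi]) (use i1 True in auto)
      also have "\<bar>real i\<bar> powr h \<le> \<bar>t\<bar> powr h" using i1 h by (intro powr_mono2) auto
      then have "\<bar>real i\<bar> powr h / 16 \<le> (\<bar>t\<bar> powr h + 1) / 4"
        by (rule aux16) (use powr_ge_zero[of "\<bar>t\<bar>" h] in auto)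
      finally show ?thesis .
    next
      case False
      have "\<bar>W t \<omega>\<bar> \<le> \<bar>-(real i + 1)\<bar> powr h / 16"
        by (rule blk[OF mi]) (use i1 False in auto)
      also have "\<bar>-(real i + 1)\<bar> powr h = (real i + 1) powr h" by (simp add: add.commute)
      also have "(real i + 1) powr h \<le> (\<bar>t\<bar> + 1) powr h" using i1 h by (intro powr_mono2) auto
      also have "\<dots> \<le> 4 * (\<bar>t\<bar> powr h + 1 powr h)" by (rule powr_add_le4) (use h in auto)
      finally show ?thesis by simp
    qed
    then show ?thesis unfolding h_def by simp
  qed
qed



lemma base_bounds:
  assumes F: "is_fbm M H W" and H: "0 < H"
    and KC: "\<And>b y. 0 \<le> y \<Longrightarrow> measure M {\<omega>\<in>space M. bad_chain W (2*H) b y \<omega>} \<le> K * exp (-(c * y\<^sup>2))"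
    and c: "0 < c" and K: "0 \<le> K" and b: "1 \<le> \<bar>b\<bar>"
  shows "measure M {\<omega>\<in>space M. \<bar>b\<bar> powr (2*H) / 32 < \<bar>W b \<omega>\<bar>} \<le> 2 * exp (-(min (1/4096) (c/1024) * \<bar>b\<bar> powr (2*H)))"
    and "measure M {\<omega>\<in>space M. bad_chain W (2*H) b (\<bar>b\<bar> powr (2*H) / 32) \<omega>} \<le> K * exp (-(min (1/4096) (c/1024) * \<bar>b\<bar> powr (2*H)))"
proof -
  interpret prob_space M using fbm_facts(1)[OF F] .
  have Wm: "\<And>t. W t \<in> borel_measurable M" using fbm_facts(2)[OF F] .
  define v where "v = \<bar>b\<bar> powr (2*H)"
  have v1: "1 \<le> v" unfolding v_def using b H by (intro ge_one_powr_ge_zero) auto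
  define c' where "c' = min (1/4096) (c/1024)"
  have "measure M {\<omega>\<in>space M. v / 32 < \<bar>W b \<omega>\<bar>} \<le> measure M {\<omega>\<in>space M. v / 32 \<le> \<bar>W b \<omega>\<bar>}"
    by (intro finite_measure_mono diff_gt_sets(4)[OF Wm]) auto
  also have "\<dots> \<le> 2 * exp (-((v/32)\<^sup>2) / (4 * v))"
    unfolding v_def by (rule fbm_single_tail[OF F]) simp
  also have "-((v/32)\<^sup>2) / (4 * v) = -(v / 4096)" using v1 by (simp add: power2_eq_square field_simps)
  also have "exp (-(v / 4096)) \<le> exp (-(c' * v))"
  proof -
    have "c' * v \<le> 1/4096 * v" using v1 by (intro mult_right_mono) (auto simp: c'_def)
    then show ?thesis by simp
  qed
  finally show "measure M {\<omega>\<in>space M. \<bar>b\<bar> powr (2*H) / 32 < \<bar>W b \<omega>\<bar>} \<le> 2 * exp (-(min (1/4096) (c/1024) * \<bar>b\<bar> powr (2*H)))"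
    unfolding v_def c'_def by simp
  have "measure M {\<omega>\<in>space M. bad_chain W (2*H) b (v / 32) \<omega>} \<le> K * exp (-(c * (v/32)\<^sup>2))"
    by (rule KC) (use v1 in simp)
  also have "exp (-(c * (v/32)\<^sup>2)) \<le> exp (-(c' * v))"
  proof -
    have "v \<le> v\<^sup>2" using v1 by (simp add: power2_eq_square)
    have "c' * v \<le> c / 1024 * v" using v1 by (intro mult_right_mono) (auto simp: c'_def)
    also have "\<dots> \<le> c / 1024 * v\<^sup>2" using c \<open>v \<le> v\<^sup>2\<close> by (intro mult_left_mono) auto
    finally have "c' * v \<le> c / 1024 * v\<^sup>2" .
    then show ?thesis by (simp add: power2_eq_square field_simps)
  qed
  then have "K * exp (-(c * (v/32)\<^sup>2)) \<le> K * exp (-(c' * v))" using K by (rule mult_left_mono)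
  finally show "measure M {\<omega>\<in>space M. bad_chain W (2*H) b (\<bar>b\<bar> powr (2*H) / 32) \<omega>} \<le> K * exp (-(min (1/4096) (c/1024) * \<bar>b\<bar> powr (2*H)))"
    unfolding v_def c'_def by simp
qed



lemma chain_y_bound:
  assumes KC: "measure M S \<le> K * exp (-(c * (v/32)\<^sup>2))" and c: "0 < c" and K: "0 \<le> K" and v1: "1 \<le> v"
  shows "measure M S \<le> K * exp (-(min (1/4096) (c/1024) * v))"
proof -
  define c' where "c' = min (1/4096) (c/1024)"
  have "exp (-(c * (v/32)\<^sup>2)) \<le> exp (-(c' * v))"
  proof -
    have "v \<le> v\<^sup>2" using v1 by (simp add: power2_eq_square)
    have "c' * v \<le> c / 1024 * v" using v1 by (intro mult_right_mono) (auto simp: c'_def)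
    also have "\<dots> \<le> c / 1024 * v\<^sup>2" using c \<open>v \<le> v\<^sup>2\<close> by (intro mult_left_mono) auto
    finally have "c' * v \<le> c / 1024 * v\<^sup>2" .
    then show ?thesis by (simp add: power2_eq_square field_simps)
  qed
  then have "K * exp (-(c * (v/32)\<^sup>2)) \<le> K * exp (-(c' * v))" using K by (rule mult_left_mono)
  then show ?thesis using KC unfolding c'_def by linarith
qed

lemma bad_prob:
  assumes F: "is_fbm M H W" and H: "0 < H" "H \<le> 1"
  shows "\<exists>A \<beta>. 0 < \<beta> \<and> (\<forall>m. 1 \<le> m \<longrightarrow> badset M W (2*H) m \<in> sets M \<and>
            measure M (badset M W (2*H) m) \<le> A * exp (-(\<beta> * real m powr (2*H))))"
proof -
  interpret prob_space M using fbm_facts(1)[OF F] .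
  have Wm: "\<And>t. W t \<in> borel_measurable M" using fbm_facts(2)[OF F] .
  obtain K c where c: "0 < c" and KC: "\<And>b y. 0 \<le> y \<Longrightarrow> measure M {\<omega>\<in>space M. bad_chain W (2*H) b y \<omega>} \<le> K * exp (-(c * y\<^sup>2))"
    using chain_prob[OF F H(1)] by blast
  have K: "0 \<le> K"
  proof -
    have "measure M {\<omega>\<in>space M. bad_chain W (2*H) 0 0 \<omega>} \<le> K" using KC[of 0 0] by simp
    moreover have "0 \<le> measure M {\<omega>\<in>space M. bad_chain W (2*H) 0 0 \<omega>}" by (rule measure_nonneg)
    ultimately show ?thesis by linarith
  qed
  define h where "h = 2 * H"
  have h: "0 < h" "h \<le> 2" using H h_def by auto
  define c' where "c' = min (1/4096) (c/1024)"
  have c': "0 < c'" unfolding c'_def using c by simp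
  define \<beta> where "\<beta> = c' / 2"
  have \<beta>: "0 < \<beta>" using c' \<beta>_def by simp
  define g where "g i = (real i + 1) ^ 0 * exp (-(\<beta> * real i powr h))" for i :: nat
  have sg: "summable g" unfolding g_def by (rule summable_pexp[OF \<beta> h(1)])
  define S2 where "S2 = (\<Sum>i. g i)"
  have S20: "0 \<le> S2" unfolding S2_def using sg by (intro suminf_nonneg) (auto simp: g_def)
  define A where "A = K + 2 * (2 + K) * S2"
  have "\<forall>m. 1 \<le> m \<longrightarrow> badset M W h m \<in> sets M \<and> measure M (badset M W h m) \<le> A * exp (-(\<beta> * real m powr h))"
  proof (intro allI impI conjI)
    fix m :: nat assume m: "1 \<le> m"
    define B0 where "B0 = {\<omega>\<in>space M. bad_chain W h 0 (real m powr h / 32) \<omega>}"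
    define P where "P b = {\<omega>\<in>space M. \<bar>b\<bar> powr h / 32 < \<bar>W b \<omega>\<bar>} \<union> {\<omega>\<in>space M. bad_chain W h b (\<bar>b\<bar> powr h / 32) \<omega>}" for b
    define D where "D i = (if m \<le> i then P (real i) \<union> P (-(real i + 1)) else {})" for i :: nat
    have eq: "badset M W h m = B0 \<union> (\<Union>i. D i)"
      unfolding badset_def B0_def D_def P_def by auto
    have Ps: "P b \<in> sets M" for b
      unfolding P_def by (intro sets.Un diff_gt_sets(3)[OF Wm] bad_chain_sets[OF Wm])
    have Ds: "D i \<in> sets M" for i unfolding D_def using Ps by auto
    have B0s: "B0 \<in> sets M" unfolding B0_def by (rule bad_chain_sets[OF Wm])
    show "badset M W h m \<in> sets M" unfolding eq using Ds B0s by auto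
    have Pb: "measure M (P b) \<le> (2 + K) * exp (-(c' * \<bar>b\<bar> powr h))" if "1 \<le> \<bar>b\<bar>" for b
    proof -
      have "measure M (P b) \<le> measure M {\<omega>\<in>space M. \<bar>b\<bar> powr h / 32 < \<bar>W b \<omega>\<bar>} + measure M {\<omega>\<in>space M. bad_chain W h b (\<bar>b\<bar> powr h / 32) \<omega>}"
        unfolding P_def by (intro measure_Un_le diff_gt_sets(3)[OF Wm] bad_chain_sets[OF Wm])
      also have "\<dots> \<le> 2 * exp (-(c' * \<bar>b\<bar> powr h)) + K * exp (-(c' * \<bar>b\<bar> powr h))"
        using base_bounds[OF F H(1) KC c K that] unfolding c'_def h_def by (intro add_mono) auto
      finally show ?thesis by (simp add: algebra_simps)
    qed
    define u where "u i = (if m \<le> i then 2 * (2 + K) * exp (-(c' * real i powr h)) else 0)" for i :: nat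
    have Du: "measure M (D i) \<le> u i" for i
    proof (cases "m \<le> i")
      case True
      have i1: "1 \<le> real i" using m True by simp
      have "measure M (D i) \<le> measure M (P (real i)) + measure M (P (-(real i + 1)))"
        unfolding D_def using True by (simp add: measure_Un_le Ps)
      also have "\<dots> \<le> (2 + K) * exp (-(c' * \<bar>real i\<bar> powr h)) + (2 + K) * exp (-(c' * \<bar>-(real i + 1)\<bar> powr h))"
        using i1 by (intro add_mono Pb) auto
      also have "exp (-(c' * \<bar>-(real i + 1)\<bar> powr h)) \<le> exp (-(c' * \<bar>real i\<bar> powr h))"
      proof -
        have "\<bar>real i\<bar> powr h \<le> \<bar>-(real i + 1)\<bar> powr h" using h by (intro powr_mono2) auto
        then show ?thesis using c' by simp
      qed
      then have "(2 + K) * exp (-(c' * \<bar>real i\<bar> powr h)) + (2 + K) * exp (-(c' * \<bar>-(real i + 1)\<bar> powr h))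
          \<le> (2 + K) * exp (-(c' * \<bar>real i\<bar> powr h)) + (2 + K) * exp (-(c' * \<bar>real i\<bar> powr h))"
        using K by (intro add_left_mono mult_left_mono) auto
      finally show ?thesis unfolding u_def using True by (simp add: algebra_simps)
    qed (simp add: D_def u_def)
    define em where "em = exp (-(\<beta> * real m powr h))"
    have ug: "u i \<le> 2 * (2 + K) * em * g i" for i
    proof (cases "m \<le> i")
      case True
      have "real m powr h \<le> real i powr h" using True h by (intro powr_mono2) auto
      then have "-(c' * real i powr h) \<le> -(\<beta> * real m powr h) + -(\<beta> * real i powr h)"
        unfolding \<beta>_def using c' by (simp add: field_simps)
      then have "exp (-(c' * real i powr h)) \<le> em * g i"
        unfolding em_def g_def by (simp add: exp_add[symmetric])
      then show ?thesis unfolding u_def using True K by (simp add: mult.assoc)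
    qed (simp add: u_def g_def em_def K)
    have su2: "summable (\<lambda>i. 2 * (2 + K) * em * g i)" by (intro summable_mult sg)
    have u0: "0 \<le> u i" for i unfolding u_def using K by simp
    have su: "summable u" by (rule summable_comparison_test'[OF su2]) (use u0 ug in auto)
    have "measure M (\<Union>i. D i) \<le> (\<Sum>i. u i)"
      by (rule measure_UN_bound) (use Ds Du u0 su in auto)
    also have "\<dots> \<le> (\<Sum>i. 2 * (2 + K) * em * g i)" by (rule suminf_le[OF ug su su2])
    also have "\<dots> = 2 * (2 + K) * em * S2" unfolding S2_def by (rule suminf_mult[OF sg])
    finally have U: "measure M (\<Union>i. D i) \<le> 2 * (2 + K) * em * S2" .
    have vm: "1 \<le> real m powr h" using m h by (intro ge_one_powr_ge_zero) auto
    have "measure M B0 \<le> K * exp (-(c' * real m powr h))"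
      unfolding c'_def B0_def by (rule chain_y_bound[OF _ c K vm]) (rule KC[unfolded h_def[symmetric]], use vm in simp)
    also have "exp (-(c' * real m powr h)) \<le> em"
      unfolding em_def \<beta>_def using c' vm by simp
    then have "K * exp (-(c' * real m powr h)) \<le> K * em" using K by (rule mult_left_mono)
    finally have B: "measure M B0 \<le> K * em" .
    have "measure M (badset M W h m) \<le> measure M B0 + measure M (\<Union>i. D i)"
      unfolding eq by (rule measure_Un_le[OF B0s]) (use Ds in auto)
    also have "\<dots> \<le> K * em + 2 * (2 + K) * em * S2" using B U by simp
    also have "\<dots> = A * em" unfolding A_def by (simp add: algebra_simps)
    finally show "measure M (badset M W h m) \<le> A * exp (-(\<beta> * real m powr h))" unfolding em_def .
  qed
  then show ?thesis using \<beta> unfolding h_def by blast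
qed



lemma zeta_bound:
  assumes F: "is_fbm M H W" and H: "0 < H" "H \<le> 1" and \<omega>: "\<omega> \<in> space M"
    and nb: "\<omega> \<notin> badset M W (2*H) m" and m: "1 \<le> m"
  shows "\<bar>pitman_zeta H W \<omega>\<bar> \<le> real m + exp (3/4) * S1 (2*H)"
proof -
  have wm: "(\<lambda>t. W t \<omega>) \<in> borel_measurable borel"
    by (rule borel_measurable_continuous_onI) (rule fbm_facts(3)[OF F \<omega>])
  have "\<bar>\<integral>t. t * (exp (W t \<omega> - \<bar>t\<bar> powr (2*H) / 2) / (\<integral>u. exp (W u \<omega> - \<bar>u\<bar> powr (2*H) / 2) \<partial>lborel)) \<partial>lborel\<bar>
           \<le> real m + exp (3/4) * S1 (2*H)"
    by (rule zeta_det[OF _ m wm good_A(1)[OF F H \<omega> nb m] good_A(2)[OF F H \<omega> nb m]]) (use H in auto)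
  then show ?thesis unfolding pitman_zeta_def fbm_q_def fbm_Z_def .
qed

theorem theorem1:
  fixes M :: "'a measure" and W :: "real \<Rightarrow> 'a \<Rightarrow> real" and H :: real
  assumes "0 < H" "H \<le> 1" "is_fbm M H W"
  shows "\<exists>\<alpha>>0. \<forall>\<delta><\<alpha>.
           (\<integral>\<^sup>+\<omega>. ennreal (exp (\<delta> * \<bar>pitman_zeta H W \<omega>\<bar> powr (2*H))) \<partial>M) < \<infinity>"
proof -
  note F = assms(3) and H = assms(1,2)
  interpret prob_space M using fbm_facts(1)[OF F] .
  define h where "h = 2 * H"
  have h: "0 < h" "h \<le> 2" using H h_def by auto
  obtain A \<beta> where \<beta>: "0 < \<beta>" and AB: "\<And>m. 1 \<le> m \<Longrightarrow> badset M W h m \<in> sets M \<and>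
            measure M (badset M W h m) \<le> A * exp (-(\<beta> * real m powr h))"
    using bad_prob[OF F H] unfolding h_def by blast
  have A: "0 \<le> A"
  proof -
    have "0 \<le> measure M (badset M W h 1)" by (rule measure_nonneg)
    also have "\<dots> \<le> A * exp (-(\<beta> * real 1 powr h))" using AB[of 1] by simp
    finally show ?thesis by (simp add: zero_le_mult_iff)
  qed
  define C0 where "C0 = exp (3/4) * S1 h"
  have C0: "0 \<le> C0" unfolding C0_def using S1_nonneg[OF h(1)] by simp
  have ZB: "\<bar>pitman_zeta H W \<omega>\<bar> \<le> real m + C0" if "\<omega> \<in> space M" "\<omega> \<notin> badset M W h m" "1 \<le> m" for \<omega> m
    using zeta_bound[OF F H that[unfolded h_def]] unfolding C0_def h_def .
  define \<alpha> where "\<alpha> = \<beta> / 8"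
  have "\<forall>\<delta><\<alpha>. (\<integral>\<^sup>+\<omega>. ennreal (exp (\<delta> * \<bar>pitman_zeta H W \<omega>\<bar> powr h)) \<partial>M) < \<infinity>"
  proof (intro allI impI)
    fix \<delta> :: real assume "\<delta> < \<alpha>"
    show "(\<integral>\<^sup>+\<omega>. ennreal (exp (\<delta> * \<bar>pitman_zeta H W \<omega>\<bar> powr h)) \<partial>M) < \<infinity>"
    proof (cases "\<delta> \<le> 0")
      case True
      have "(\<integral>\<^sup>+\<omega>. ennreal (exp (\<delta> * \<bar>pitman_zeta H W \<omega>\<bar> powr h)) \<partial>M) \<le> (\<integral>\<^sup>+\<omega>. 1 \<partial>M)"
      proof (rule nn_integral_mono)
        fix \<omega> assume "\<omega> \<in> space M"
        have "\<delta> * \<bar>pitman_zeta H W \<omega>\<bar> powr h \<le> 0" using True by (simp add: mult_nonpos_nonneg)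
        then show "ennreal (exp (\<delta> * \<bar>pitman_zeta H W \<omega>\<bar> powr h)) \<le> 1" by simp
      qed
      also have "\<dots> = 1" by (simp add: emeasure_space_1)
      finally show ?thesis by (simp add: le_less_trans)
    next
      case False
      then have \<delta>: "0 < \<delta>" by simp
      define a where "a m = exp (\<delta> * (real m + 1 + C0) powr h)" for m :: nat
      define T where "T m \<omega> = (if 1 \<le> m then ennreal (a m) * indicator (badset M W h m) \<omega> else 0)" for m \<omega>
      define e0 where "e0 = exp (\<delta> * (1 + C0) powr h)"
      have Tm: "T m \<in> borel_measurable M" for m
      proof (cases "1 \<le> m")
        case True
        then have [measurable]: "badset M W h m \<in> sets M" using AB by blast
        show ?thesis unfolding T_def using True by measurable
      next
        case False
        then have "T m = (\<lambda>\<omega>. 0)" by (auto simp: T_def fun_eq_iff)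
        then show ?thesis by simp
      qed
      have pw: "ennreal (exp (\<delta> * \<bar>pitman_zeta H W \<omega>\<bar> powr h)) \<le> ennreal e0 + (\<Sum>m. T m \<omega>)" if \<omega>: "\<omega> \<in> space M" for \<omega>
      proof -
        define z where "z = \<bar>pitman_zeta H W \<omega>\<bar>"
        show ?thesis
        proof (cases "z \<le> 1 + C0")
          case True
          have "z powr h \<le> (1 + C0) powr h" using True h by (intro powr_mono2) (auto simp: z_def)
          then have "exp (\<delta> * z powr h) \<le> e0" unfolding e0_def using \<delta> by simp
          then have "ennreal (exp (\<delta> * z powr h)) \<le> ennreal e0" by (rule ennreal_leI)
          then show ?thesis unfolding z_def[symmetric] by (rule order_trans) simp
        next
          case False
          define m where "m = nat \<lceil>z - C0\<rceil> - 1"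
          have m1: "1 \<le> m" unfolding m_def using False by linarith
          have mlt: "real m < z - C0" "z - C0 \<le> real m + 1" unfolding m_def using False by linarith+
          have bad: "\<omega> \<in> badset M W h m" using ZB[OF \<omega> _ m1] mlt unfolding z_def by force
          have "z powr h \<le> (real m + 1 + C0) powr h" using mlt h by (intro powr_mono2) (auto simp: z_def)
          then have "exp (\<delta> * z powr h) \<le> a m" unfolding a_def using \<delta> by simp
          then have "ennreal (exp (\<delta> * z powr h)) \<le> T m \<omega>" unfolding T_def using m1 bad by (simp add: ennreal_leI)
          also have "\<dots> \<le> (\<Sum>m. T m \<omega>)" by (rule ennreal_le_suminf)
          finally show ?thesis unfolding z_def[symmetric] by (rule order_trans) simp
        qed
      qed
      define b where "b m = (if 1 \<le> m then a m * (A * exp (-(\<beta> * real m powr h))) else 0)" for m :: nat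
      have b0: "0 \<le> b m" for m unfolding b_def a_def using A by simp
      define k where "k = exp (4 * \<delta> * (1 + C0) powr h) * A"
      have bg: "b m \<le> k * ((real m + 1) ^ 0 * exp (-(\<beta> / 2 * real m powr h)))" for m
      proof (cases "1 \<le> m")
        case True
        have X: "(real m + (1 + C0)) powr h \<le> 4 * (real m powr h + (1 + C0) powr h)"
          by (rule powr_add_le4) (use h C0 in auto)
        have "\<delta> * (real m + (1 + C0)) powr h \<le> \<delta> * (4 * (real m powr h + (1 + C0) powr h))"
          by (rule mult_left_mono[OF X]) (use \<delta> in simp)
        also have "\<dots> = 4 * \<delta> * (1 + C0) powr h + 4 * \<delta> * real m powr h" by (simp add: algebra_simps)
        finally have "\<delta> * (real m + 1 + C0) powr h \<le> 4 * \<delta> * (1 + C0) powr h + 4 * \<delta> * real m powr h"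
          by (simp add: add.assoc)
        moreover have "4 * \<delta> * real m powr h \<le> \<beta> / 2 * real m powr h"
          using \<open>\<delta> < \<alpha>\<close> unfolding \<alpha>_def by (intro mult_right_mono) auto
        ultimately have "\<delta> * (real m + 1 + C0) powr h + -(\<beta> * real m powr h)
            \<le> 4 * \<delta> * (1 + C0) powr h + -(\<beta> / 2 * real m powr h)" by simp
        then have "a m * exp (-(\<beta> * real m powr h)) \<le> exp (4 * \<delta> * (1 + C0) powr h) * exp (-(\<beta> / 2 * real m powr h))"
          unfolding a_def by (simp add: exp_add[symmetric])
        then show ?thesis unfolding b_def k_def using True A
          by (simp add: mult.assoc mult.left_commute mult_left_mono)
      qed (simp add: b_def k_def A)
      have sk: "summable (\<lambda>m. k * ((real m + 1) ^ 0 * exp (-(\<beta> / 2 * real m powr h))))"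
        by (intro summable_mult summable_pexp h) (use \<beta> in simp)
      have sb: "summable b" by (rule summable_comparison_test'[OF sk]) (use b0 bg in auto)
      have "(\<integral>\<^sup>+\<omega>. ennreal (exp (\<delta> * \<bar>pitman_zeta H W \<omega>\<bar> powr h)) \<partial>M) \<le> (\<integral>\<^sup>+\<omega>. ennreal e0 + (\<Sum>m. T m \<omega>) \<partial>M)"
        by (rule nn_integral_mono) (rule pw)
      also have "\<dots> = ennreal e0 + (\<Sum>m. \<integral>\<^sup>+\<omega>. T m \<omega> \<partial>M)"
        using Tm by (simp add: nn_integral_add nn_integral_suminf emeasure_space_1)
      also have "(\<Sum>m. \<integral>\<^sup>+\<omega>. T m \<omega> \<partial>M) \<le> (\<Sum>m. ennreal (b m))"
      proof (intro suminf_le)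
        fix m
        show "(\<integral>\<^sup>+\<omega>. T m \<omega> \<partial>M) \<le> ennreal (b m)"
        proof (cases "1 \<le> m")
          case True
          then have S: "badset M W h m \<in> sets M" and P: "measure M (badset M W h m) \<le> A * exp (-(\<beta> * real m powr h))"
            using AB by auto
          have "(\<integral>\<^sup>+\<omega>. T m \<omega> \<partial>M) = ennreal (a m) * emeasure M (badset M W h m)"
            unfolding T_def using True S by (simp add: nn_integral_cmult_indicator)
          also have "\<dots> = ennreal (a m * measure M (badset M W h m))"
            by (simp add: emeasure_eq_measure ennreal_mult a_def)
          also have "\<dots> \<le> ennreal (b m)"
            unfolding b_def using True P by (intro ennreal_leI mult_left_mono) (auto simp: a_def)
          finally show ?thesis .
        qed (simp add: T_def b_def)
      qed auto
      also have "(\<Sum>m. ennreal (b m)) = ennreal (\<Sum>m. b m)" by (rule suminf_ennreal2[OF b0 sb])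
      finally have "(\<integral>\<^sup>+\<omega>. ennreal (exp (\<delta> * \<bar>pitman_zeta H W \<omega>\<bar> powr h)) \<partial>M) \<le> ennreal e0 + ennreal (\<Sum>m. b m)"
        by (simp add: add_left_mono)
      also have "\<dots> < \<infinity>" by simp
      finally show ?thesis .
    qed
  qed
  moreover have "0 < \<alpha>" unfolding \<alpha>_def using \<beta> by simp
  ultimately show ?thesis unfolding h_def by blast
qed


end
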